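(* Let $a>1$, $k\geq0$, $n\geq1$, $C_j(n,a)=\binom{n}{j}\left(\frac{1+a}{2}\right)^{n-j}\left(\frac{1-a}{2}\right)^j$, and $\mathtt{H}_{k,n}(x)=h_k(x)\sum_{j=0}^nC_j(n,a)e^{i(1-\frac{2j}{n})x}$. With $e_k(z)=z^k/\sqrt{k!}$ and $b_j=-\frac{i}{\sqrt2}(1-\frac{2j}{n})$, $$\mathcal{B}(\mathtt{H}_{k,n})(z)=\sum_{j=0}^nC_j(n,a)k_{b_j}(z)e_k(z-b_j)=\sum_{j=0}^nC_j(n,a)\mathcal{W}_{b_j}[e_k](z),\quad z\in\mathbb{C}.$$
   Context: $h_k$ are the normalized Hermite functions, $h_k(x)=(2^kk!\sqrt\pi)^{-1/2}H_k(x)e^{-x^2/2}$ with $H_k$ the Hermite polynomials. $\mathcal{B}(\varphi)(z)=\pi^{-1/4}\int_{\mathbb{R}}e^{-\frac12(z^2+x^2)+\sqrt2 zx}\varphi(x)\,dx$ is the Segal-Bargmann transform. $k_w(z)=e^{z\overline w-|w|^2/2}$ is the normalized Fock kernel, and for $b\in\mathbb{C}$ the Weyl operator on the Fock space is $\mathcal{W}_bf(z)=f(z-b)k_b(z)$. *)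

theory Defs
  imports "HOL-Analysis.Analysis"
begin

fun hermite_poly :: "nat \<Rightarrow> real \<Rightarrow> real" where
  "hermite_poly 0 x = 1"
| "hermite_poly (Suc 0) x = 2 * x"
| "hermite_poly (Suc (Suc k)) x = 2 * x * hermite_poly (Suc k) x - 2 * real (Suc k) * hermite_poly k x"

definition hermite_fun :: "nat \<Rightarrow> real \<Rightarrow> real" where
  "hermite_fun k x = (2 ^ k * fact k * sqrt pi) powr (-1/2) * hermite_poly k x * exp (- x\<^sup>2 / 2)"

definition bargmann :: "(real \<Rightarrow> complex) \<Rightarrow> complex \<Rightarrow> complex" where
  "bargmann \<phi> z = complex_of_real (pi powr (-1/4)) *
     (LINT x|lborel. exp (- (z\<^sup>2 + (complex_of_real x)\<^sup>2) / 2 + complex_of_real (sqrt 2) * z * complex_of_real x) * \<phi> x)"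

definition fock_kernel :: "complex \<Rightarrow> complex \<Rightarrow> complex" where
  "fock_kernel w z = exp (z * cnj w - complex_of_real ((cmod w)\<^sup>2) / 2)"

definition weyl :: "complex \<Rightarrow> (complex \<Rightarrow> complex) \<Rightarrow> complex \<Rightarrow> complex" where
  "weyl b f z = f (z - b) * fock_kernel b z"

definition ek :: "nat \<Rightarrow> complex \<Rightarrow> complex" where
  "ek k z = z ^ k / complex_of_real (sqrt (fact k))"

definition Ccoef :: "nat \<Rightarrow> nat \<Rightarrow> real \<Rightarrow> real" where
  "Ccoef j n a = real (n choose j) * ((1 + a) / 2) ^ (n - j) * ((1 - a) / 2) ^ j"

definition Hkn :: "nat \<Rightarrow> nat \<Rightarrow> real \<Rightarrow> real \<Rightarrow> complex" where
  "Hkn k n a x = complex_of_real (hermite_fun k x) *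
     (\<Sum>j=0..n. complex_of_real (Ccoef j n a) * exp (\<i> * complex_of_real ((1 - 2 * real j / real n) * x)))"

definition bcoef :: "nat \<Rightarrow> nat \<Rightarrow> complex" where
  "bcoef j n = - (\<i> / complex_of_real (sqrt 2)) * complex_of_real (1 - 2 * real j / real n)"

end

theory Submission
  imports Defs "HOL-Probability.Probability" "HOL-Real_Asymp.Real_Asymp"
begin


lemma gauss_char:
  "(LINT x|lborel. complex_of_real (exp (-(x\<^sup>2)/2)) * exp (\<i> * complex_of_real (t*x)))
     = complex_of_real (sqrt (2*pi) * exp (-(t\<^sup>2)/2))"
proof -
  have "char std_normal_distribution t = complex_of_real (exp (- (t^2) / 2))"
    by (simp add: char_std_normal_distribution)
  also have "char std_normal_distribution t = (LINT x|lborel. std_normal_density x *\<^sub>R exp (\<i> * complex_of_real (t*x)))"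
    unfolding char_def by (subst integral_density) auto
  also have "(LINT x|lborel. std_normal_density x *\<^sub>R exp (\<i> * complex_of_real (t*x)))
      = (1 / sqrt (2*pi)) *\<^sub>R (LINT x|lborel. complex_of_real (exp (-(x\<^sup>2)/2)) * exp (\<i> * complex_of_real (t*x)))"
    by (simp add: std_normal_density_def scaleR_conv_of_real mult.assoc)
  finally show ?thesis
    by (simp add: scaleR_conv_of_real field_simps)
qed



definition EK :: "complex \<Rightarrow> real \<Rightarrow> complex" where
  "EK w x = exp (- (w\<^sup>2 + (complex_of_real x)\<^sup>2) / 2 + complex_of_real (sqrt 2) * w * complex_of_real x)
            * complex_of_real (exp (- x\<^sup>2 / 2))"

lemma EK_exp: "EK w x = exp (- (w\<^sup>2) / 2 - (complex_of_real x)\<^sup>2 + complex_of_real (sqrt 2) * w * complex_of_real x)"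
proof -
  have "EK w x = exp (- (w\<^sup>2 + (complex_of_real x)\<^sup>2) / 2 + complex_of_real (sqrt 2) * w * complex_of_real x
            + complex_of_real (- x\<^sup>2 / 2))"
    unfolding EK_def exp_add by (simp only: exp_of_real)
  also have "- (w\<^sup>2 + (complex_of_real x)\<^sup>2) / 2 + complex_of_real (sqrt 2) * w * complex_of_real x
            + complex_of_real (- x\<^sup>2 / 2) = - (w\<^sup>2) / 2 - (complex_of_real x)\<^sup>2 + complex_of_real (sqrt 2) * w * complex_of_real x"
    by (simp add: field_simps)
  finally show ?thesis .
qed

lemma A1: fixes u v y :: real shows
 "- ((complex_of_real u + \<i> * complex_of_real v)\<^sup>2) / 2 - (complex_of_real (u / sqrt 2 + (1 / sqrt 2) * y))\<^sup>2
         + complex_of_real (sqrt 2) * (complex_of_real u + \<i> * complex_of_real v) * complex_of_real (u / sqrt 2 + (1 / sqrt 2) * y)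
        = complex_of_real (v\<^sup>2/2) + (complex_of_real (-(y\<^sup>2)/2) + \<i> * complex_of_real (v * y))"
  by (simp add: complex_eq_iff power2_eq_square field_simps)

lemma I0: "(LINT x|lborel. EK w x) = complex_of_real (sqrt pi)"
proof -
  define u where "u = Re w"
  define v where "v = Im w"
  have w: "w = complex_of_real u + \<i> * complex_of_real v"
    by (simp add: u_def v_def complex_eq_iff)
  have s2: "complex_of_real (sqrt 2) * complex_of_real (sqrt 2) = 2"
    by (simp flip: of_real_mult)
  have pt: "EK w (u / sqrt 2 + (1 / sqrt 2) * y) =
      complex_of_real (exp (v\<^sup>2/2)) * (complex_of_real (exp (-(y\<^sup>2)/2)) * exp (\<i> * complex_of_real (v * y)))" for y
  proof -
    have "- (w\<^sup>2) / 2 - (complex_of_real (u / sqrt 2 + (1 / sqrt 2) * y))\<^sup>2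
         + complex_of_real (sqrt 2) * w * complex_of_real (u / sqrt 2 + (1 / sqrt 2) * y)
        = complex_of_real (v\<^sup>2/2) + (complex_of_real (-(y\<^sup>2)/2) + \<i> * complex_of_real (v * y))"
      unfolding w by (rule A1)
    then show ?thesis unfolding EK_exp by (simp only: exp_add exp_of_real)
  qed
  have "(LINT x|lborel. EK w x) = \<bar>1 / sqrt 2\<bar> *\<^sub>R (LINT y|lborel. EK w (u / sqrt 2 + (1 / sqrt 2) * y))"
    by (rule lborel_integral_real_affine) simp
  also have "\<dots> = (1 / sqrt 2) *\<^sub>R (complex_of_real (exp (v\<^sup>2/2)) *
      (LINT y|lborel. complex_of_real (exp (-(y\<^sup>2)/2)) * exp (\<i> * complex_of_real (v * y))))"
    by (simp only: pt integral_mult_right_zero abs_divide abs_one real_sqrt_abs2) simp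
  also have "\<dots> = complex_of_real (sqrt pi)"
  proof -
    have "sqrt (2 * pi) = sqrt 2 * sqrt pi" by (simp add: real_sqrt_mult)
    then show ?thesis unfolding gauss_char
      by (simp add: scaleR_conv_of_real exp_minus field_simps flip: of_real_mult)
  qed
  finally show ?thesis .
qed



lemma H_rec: "hermite_poly (Suc k) x = 2 * x * hermite_poly k x - 2 * real k * hermite_poly (k - 1) x"
  by (cases k) auto

lemma H_deriv: "(hermite_poly k has_real_derivative (2 * real k * hermite_poly (k - 1) x)) (at x)"
proof (induction k x rule: hermite_poly.induct)
  case (1 x)
  then show ?case by (auto intro!: derivative_eq_intros)
next
  case (2 x)
  then show ?case by (auto intro!: derivative_eq_intros)
next
  case (3 k x)
  have d: "((\<lambda>x. 2 * x * hermite_poly (Suc k) x - 2 * real (Suc k) * hermite_poly k x) has_real_derivative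
     (2 * hermite_poly (Suc k) x + 2 * x * (2 * real (Suc k) * hermite_poly k x)
       - 2 * real (Suc k) * (2 * real k * hermite_poly (k - 1) x))) (at x)"
    using 3 by (auto intro!: derivative_eq_intros)
  have e: "2 * hermite_poly (Suc k) x + 2 * x * (2 * real (Suc k) * hermite_poly k x)
       - 2 * real (Suc k) * (2 * real k * hermite_poly (k - 1) x) = 2 * real (Suc (Suc k)) * hermite_poly (Suc (Suc k) - 1) x"
    by (simp only: diff_Suc_1 H_rec[of k x]) (simp add: algebra_simps)
  have f: "hermite_poly (Suc (Suc k)) = (\<lambda>x. 2 * x * hermite_poly (Suc k) x - 2 * real (Suc k) * hermite_poly k x)"
    by (rule ext) simp
  show ?case using d unfolding e f .
qed

lemma H_cont: "continuous_on UNIV (hermite_poly k)"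
  by (metis DERIV_isCont H_deriv continuous_at_imp_continuous_on)

lemma H_bound: "\<exists>M\<ge>0. \<forall>y. \<bar>hermite_poly k y\<bar> \<le> M * (1 + \<bar>y\<bar>) ^ k"
proof (induction k rule: less_induct)
  case (less k)
  have "k = 0 \<or> k = Suc 0 \<or> (\<exists>j. k = Suc (Suc j))" by presburger
  moreover have ?case if "k = 0" using that by (intro exI[of _ 1]) auto
  moreover have ?case if "k = Suc 0" using that by (intro exI[of _ 2]) auto
  moreover have ?case if kk: "k = Suc (Suc k')" for k'
  proof -
  from less[of "Suc k'"] kk obtain M1 where M1: "M1 \<ge> 0" "\<forall>y. \<bar>hermite_poly (Suc k') y\<bar> \<le> M1 * (1 + \<bar>y\<bar>) ^ Suc k'" by auto
  from less[of k'] kk obtain M0 where M0: "M0 \<ge> 0" "\<forall>y. \<bar>hermite_poly k' y\<bar> \<le> M0 * (1 + \<bar>y\<bar>) ^ k'" by auto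
  have "\<exists>M\<ge>0. \<forall>y. \<bar>hermite_poly (Suc (Suc k')) y\<bar> \<le> M * (1 + \<bar>y\<bar>) ^ Suc (Suc k')"
  proof (intro exI[of _ "2 * M1 + 2 * real (Suc k') * M0"] conjI allI)
    show "0 \<le> 2 * M1 + 2 * real (Suc k') * M0" using M0 M1 by simp
    fix y :: real
    have p: "1 \<le> 1 + \<bar>y\<bar>" by simp
    have a: "\<bar>2 * y * hermite_poly (Suc k') y\<bar> \<le> 2 * M1 * (1 + \<bar>y\<bar>) ^ Suc (Suc k')"
    proof -
      have "\<bar>2 * y * hermite_poly (Suc k') y\<bar> = 2 * \<bar>y\<bar> * \<bar>hermite_poly (Suc k') y\<bar>" by (simp add: abs_mult)
      also have "\<dots> \<le> 2 * (1 + \<bar>y\<bar>) * (M1 * (1 + \<bar>y\<bar>) ^ Suc k')"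
        using M1 by (intro mult_mono) auto
      finally show ?thesis by (simp add: algebra_simps)
    qed
    have b: "\<bar>2 * real (Suc k') * hermite_poly k' y\<bar> \<le> 2 * real (Suc k') * M0 * (1 + \<bar>y\<bar>) ^ Suc (Suc k')"
    proof -
      have "\<bar>2 * real (Suc k') * hermite_poly k' y\<bar> = 2 * real (Suc k') * \<bar>hermite_poly k' y\<bar>" by (simp add: abs_mult)
      also have "\<dots> \<le> 2 * real (Suc k') * (M0 * (1 + \<bar>y\<bar>) ^ k')"
        using M0 by (intro mult_left_mono) auto
      also have "\<dots> \<le> 2 * real (Suc k') * (M0 * (1 + \<bar>y\<bar>) ^ Suc (Suc k'))"
        using M0 p by (intro mult_left_mono power_increasing) auto
      finally show ?thesis by (simp add: algebra_simps)
    qed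
    have "\<bar>hermite_poly (Suc (Suc k')) y\<bar> \<le> \<bar>2 * y * hermite_poly (Suc k') y\<bar> + \<bar>2 * real (Suc k') * hermite_poly k' y\<bar>"
      by simp
    then show "\<bar>hermite_poly (Suc (Suc k')) y\<bar> \<le> (2 * M1 + 2 * real (Suc k') * M0) * (1 + \<bar>y\<bar>) ^ Suc (Suc k')"
      using a b by (simp add: algebra_simps)
  qed
  then show ?thesis using kk by simp
  qed
  ultimately show ?case by blast
qed

lemma pow_le_exp: "(y::real) \<ge> 0 \<Longrightarrow> y ^ m \<le> fact m * exp y"
proof -
  assume y: "y \<ge> 0"
  have "y ^ m / fact m \<le> (\<Sum>n\<le>m. y ^ n / fact n)"
    using y by (intro member_le_sum) auto
  also have "\<dots> \<le> exp y"
    using y summable_exp_generic[of y]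
    by (auto simp: exp_def divide_inverse ac_simps intro!: sum_le_suminf)
  finally show ?thesis by (simp add: field_simps)
qed

lemma gauss_dom_bound:
  fixes M c :: real
  shows "M * (1 + \<bar>x\<bar>) ^ m * exp (- x\<^sup>2 + c * \<bar>x\<bar>) \<le> \<bar>M\<bar> * fact m * exp (1 + (\<bar>c\<bar> + 1)\<^sup>2 / 2) * exp (- x\<^sup>2 / 2)"
proof -
  have "M * (1 + \<bar>x\<bar>) ^ m * exp (- x\<^sup>2 + c * \<bar>x\<bar>) \<le> \<bar>M\<bar> * (fact m * exp (1 + \<bar>x\<bar>)) * exp (- x\<^sup>2 + c * \<bar>x\<bar>)"
    by (intro mult_right_mono mult_mono pow_le_exp) auto
  also have "\<dots> = \<bar>M\<bar> * fact m * exp (1 + \<bar>x\<bar> - x\<^sup>2 + c * \<bar>x\<bar>)"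
    by (simp add: exp_add exp_diff exp_minus field_simps)
  also have "\<dots> \<le> \<bar>M\<bar> * fact m * exp (1 + (\<bar>c\<bar> + 1)\<^sup>2 / 2 - x\<^sup>2 / 2)"
  proof -
    have "c * \<bar>x\<bar> \<le> \<bar>c\<bar> * \<bar>x\<bar>" by (simp add: mult_right_mono)
    moreover have "0 \<le> ((\<bar>c\<bar> + 1) - \<bar>x\<bar>)\<^sup>2" by simp
    moreover have "((\<bar>c\<bar> + 1) - \<bar>x\<bar>)\<^sup>2 = (\<bar>c\<bar> + 1)\<^sup>2 - 2 * (\<bar>c\<bar> * \<bar>x\<bar>) - 2 * \<bar>x\<bar> + x\<^sup>2"
      by (simp add: power2_diff algebra_simps)
    ultimately have "1 + \<bar>x\<bar> - x\<^sup>2 + c * \<bar>x\<bar> \<le> 1 + (\<bar>c\<bar> + 1)\<^sup>2 / 2 - x\<^sup>2 / 2"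
      by linarith
    then show ?thesis by (intro mult_left_mono) auto
  qed
  also have "\<dots> = \<bar>M\<bar> * fact m * exp (1 + (\<bar>c\<bar> + 1)\<^sup>2 / 2) * exp (- x\<^sup>2 / 2)"
  proof -
    have "exp (1 + (\<bar>c\<bar> + 1)\<^sup>2 / 2 - x\<^sup>2 / 2) = exp (1 + (\<bar>c\<bar> + 1)\<^sup>2 / 2) * exp (- x\<^sup>2 / 2)"
      by (subst exp_add[symmetric]) simp
    then show ?thesis by (simp only: mult.assoc)
  qed
  finally show ?thesis .
qed

lemma integrable_gauss: "integrable lborel (\<lambda>x::real. exp (- x\<^sup>2 / 2))"
proof -
  have "integrable lborel (\<lambda>x. sqrt (2 * pi) * std_normal_density x)"
    by (intro integrable_mult_right) simp
  also have "(\<lambda>x. sqrt (2 * pi) * std_normal_density x) = (\<lambda>x::real. exp (- x\<^sup>2 / 2))"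
    by (simp add: std_normal_density_def)
  finally show ?thesis .
qed

lemma gauss_dom:
  fixes g :: "real \<Rightarrow> complex"
  assumes meas: "g \<in> borel_measurable borel"
    and bd: "\<And>x. norm (g x) \<le> M * (1 + \<bar>x\<bar>) ^ m * exp (- x\<^sup>2 + c * \<bar>x\<bar>)"
  shows "integrable lborel g" "(g \<longlongrightarrow> 0) at_top" "(g \<longlongrightarrow> 0) at_bot"
proof -
  define K where "K = \<bar>M\<bar> * fact m * exp (1 + (\<bar>c\<bar> + 1)\<^sup>2 / 2)"
  have K: "K \<ge> 0" unfolding K_def by simp
  have b: "norm (g x) \<le> K * exp (- x\<^sup>2 / 2)" for x
    using bd[of x] gauss_dom_bound[of M x m c] unfolding K_def by linarith
  show "integrable lborel g"
  proof (rule Bochner_Integration.integrable_bound[OF _ _ AE_I2])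
    show "integrable lborel (\<lambda>x. K * exp (- x\<^sup>2 / 2))"
      by (intro integrable_mult_right integrable_gauss)
    show "g \<in> borel_measurable lborel" using meas by simp
    fix x show "norm (g x) \<le> norm (K * exp (- x\<^sup>2 / 2))" using b[of x] K by simp
  qed
  have t1: "((\<lambda>x::real. K * exp (- x\<^sup>2 / 2)) \<longlongrightarrow> 0) at_top" by real_asymp
  have t2: "((\<lambda>x::real. K * exp (- x\<^sup>2 / 2)) \<longlongrightarrow> 0) at_bot" by real_asymp
  show "(g \<longlongrightarrow> 0) at_top" by (rule Lim_null_comparison[OF always_eventually t1]) (use b in auto)
  show "(g \<longlongrightarrow> 0) at_bot" by (rule Lim_null_comparison[OF always_eventually t2]) (use b in auto)
qed



lemma EK_cont: "continuous_on UNIV (EK w)"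
  unfolding EK_def by (intro continuous_intros) auto

lemma EK_norm: "norm (EK w x) \<le> exp (- Re (w\<^sup>2) / 2) * exp (- x\<^sup>2 + sqrt 2 * \<bar>Re w\<bar> * \<bar>x\<bar>)"
proof -
  have "norm (EK w x) = exp (- Re (w\<^sup>2) / 2 - x\<^sup>2 + sqrt 2 * Re w * x)"
    unfolding EK_exp norm_exp_eq_Re by (simp add: power2_eq_square) (simp add: field_simps)
  also have "\<dots> \<le> exp (- Re (w\<^sup>2) / 2 - x\<^sup>2 + sqrt 2 * \<bar>Re w\<bar> * \<bar>x\<bar>)"
  proof -
    have "Re w * x \<le> \<bar>Re w\<bar> * \<bar>x\<bar>" by (metis abs_ge_self abs_mult)
    then have "sqrt 2 * Re w * x \<le> sqrt 2 * \<bar>Re w\<bar> * \<bar>x\<bar>"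
      by (simp add: mult.assoc mult_left_mono)
    then show ?thesis by simp
  qed
  also have "\<dots> = exp (- Re (w\<^sup>2) / 2) * exp (- x\<^sup>2 + sqrt 2 * \<bar>Re w\<bar> * \<bar>x\<bar>)"
    by (subst exp_add[symmetric]) simp
  finally show ?thesis .
qed

lemma EKq:
  fixes q :: "real \<Rightarrow> real"
  assumes qc: "continuous_on UNIV q" and qb: "\<And>x. \<bar>q x\<bar> \<le> M * (1 + \<bar>x\<bar>) ^ m"
  shows "integrable lborel (\<lambda>x. EK w x * complex_of_real (q x))"
    "((\<lambda>x. EK w x * complex_of_real (q x)) \<longlongrightarrow> 0) at_top"
    "((\<lambda>x. EK w x * complex_of_real (q x)) \<longlongrightarrow> 0) at_bot"
proof -
  have meas: "(\<lambda>x. EK w x * complex_of_real (q x)) \<in> borel_measurable borel"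
    by (intro borel_measurable_continuous_onI continuous_intros EK_cont qc)
  have bd: "norm (EK w x * complex_of_real (q x)) \<le> (exp (- Re (w\<^sup>2) / 2) * M) * (1 + \<bar>x\<bar>) ^ m * exp (- x\<^sup>2 + (sqrt 2 * \<bar>Re w\<bar>) * \<bar>x\<bar>)" for x
  proof -
    have "norm (EK w x * complex_of_real (q x)) = norm (EK w x) * \<bar>q x\<bar>" by (simp add: norm_mult)
    also have "\<dots> \<le> (exp (- Re (w\<^sup>2) / 2) * exp (- x\<^sup>2 + sqrt 2 * \<bar>Re w\<bar> * \<bar>x\<bar>)) * (M * (1 + \<bar>x\<bar>) ^ m)"
      by (intro mult_mono EK_norm qb) auto
    finally show ?thesis by (simp add: algebra_simps)
  qed
  show "integrable lborel (\<lambda>x. EK w x * complex_of_real (q x))"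
    "((\<lambda>x. EK w x * complex_of_real (q x)) \<longlongrightarrow> 0) at_top"
    "((\<lambda>x. EK w x * complex_of_real (q x)) \<longlongrightarrow> 0) at_bot"
    using gauss_dom[OF meas bd] by auto
qed

lemma FTC_R:
  fixes F f :: "real \<Rightarrow> complex"
  assumes "\<And>x. (F has_vector_derivative f x) (at x)" "\<And>x. isCont f x" "integrable lborel f"
    "(F \<longlongrightarrow> 0) at_top" "(F \<longlongrightarrow> 0) at_bot"
  shows "integral\<^sup>L lborel f = 0"
proof -
  have "(LBINT x=-\<infinity>..\<infinity>. f x) = 0 - 0"
    by (rule interval_integral_FTC_integrable[where F=F])
      (use assms in \<open>auto simp: set_integrable_def ereal_tendsto_simps\<close>)
  then show ?thesis
    by (simp add: interval_lebesgue_integral_def set_lebesgue_integral_def einterval_eq_UNIV)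
qed



definition PI :: "nat \<Rightarrow> complex \<Rightarrow> complex" where
  "PI k w = (LINT x|lborel. EK w x * complex_of_real (hermite_poly k x))"

lemma Hq_bound: "\<exists>M. \<forall>y. \<bar>q y\<bar> \<le> M * (1 + \<bar>y\<bar>) ^ m"
  if "\<exists>M\<ge>0. \<forall>y. \<bar>q y\<bar> \<le> M * (1 + \<bar>y\<bar>) ^ m" for q :: "real \<Rightarrow> real" and m
  using that by blast

lemma EKH:
  "integrable lborel (\<lambda>x. EK w x * complex_of_real (hermite_poly k x))"
  "((\<lambda>x. EK w x * complex_of_real (hermite_poly k x)) \<longlongrightarrow> 0) at_top"
  "((\<lambda>x. EK w x * complex_of_real (hermite_poly k x)) \<longlongrightarrow> 0) at_bot"
proof -
  obtain M where M: "M \<ge> 0" "\<And>y. \<bar>hermite_poly k y\<bar> \<le> M * (1 + \<bar>y\<bar>) ^ k" using H_bound[of k] by blast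
  show "integrable lborel (\<lambda>x. EK w x * complex_of_real (hermite_poly k x))"
    "((\<lambda>x. EK w x * complex_of_real (hermite_poly k x)) \<longlongrightarrow> 0) at_top"
    "((\<lambda>x. EK w x * complex_of_real (hermite_poly k x)) \<longlongrightarrow> 0) at_bot"
    using EKq[OF H_cont M(2)] by auto
qed

lemma EKxH:
  "integrable lborel (\<lambda>x. EK w x * complex_of_real (x * hermite_poly k x))"
proof -
  obtain M where M: "M \<ge> 0" "\<And>y. \<bar>hermite_poly k y\<bar> \<le> M * (1 + \<bar>y\<bar>) ^ k" using H_bound[of k] by blast
  have b: "\<bar>x * hermite_poly k x\<bar> \<le> M * (1 + \<bar>x\<bar>) ^ Suc k" for x
  proof -
    have "\<bar>x * hermite_poly k x\<bar> = \<bar>x\<bar> * \<bar>hermite_poly k x\<bar>" by (simp add: abs_mult)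
    also have "\<dots> \<le> (1 + \<bar>x\<bar>) * (M * (1 + \<bar>x\<bar>) ^ k)" by (intro mult_mono M(2)) auto
    finally show ?thesis by (simp add: algebra_simps)
  qed
  have c: "continuous_on UNIV (\<lambda>x. x * hermite_poly k x)"
    by (intro continuous_intros H_cont[unfolded continuous_on_eq_continuous_at[OF open_UNIV]]
        continuous_at_imp_continuous_on) auto
  show ?thesis using EKq(1)[OF c b] .
qed

lemma EK_deriv: "(EK w has_vector_derivative (EK w x * (complex_of_real (sqrt 2) * w - 2 * complex_of_real x))) (at x)"
proof -
  define \<Phi> where "\<Phi> s = exp (- (w\<^sup>2) / 2 - s\<^sup>2 + complex_of_real (sqrt 2) * w * s)" for s
  have e: "EK w = (\<lambda>x. \<Phi> (complex_of_real x))" unfolding \<Phi>_def by (rule ext) (simp add: EK_exp)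
  have "(\<Phi> has_field_derivative (\<Phi> (complex_of_real x) * (complex_of_real (sqrt 2) * w - 2 * complex_of_real x))) (at (complex_of_real x))"
    unfolding \<Phi>_def by (auto intro!: derivative_eq_intros simp: algebra_simps)
  from has_vector_derivative_real_field[OF this] show ?thesis unfolding e by simp
qed

lemma PI_Suc: "PI (Suc k) w = complex_of_real (sqrt 2) * w * PI k w"
proof -
  define F where "F x = EK w x * complex_of_real (hermite_poly k x)" for x
  define f where "f x = EK w x * complex_of_real (2 * real k * hermite_poly (k - 1) x)
     + complex_of_real (sqrt 2) * w * (EK w x * complex_of_real (hermite_poly k x))
     - 2 * (EK w x * complex_of_real (x * hermite_poly k x))" for x
  have iA: "integrable lborel (\<lambda>x. EK w x * complex_of_real (hermite_poly k x))" by (rule EKH)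
  have iB: "integrable lborel (\<lambda>x. EK w x * complex_of_real (x * hermite_poly k x))" by (rule EKxH)
  have iC: "integrable lborel (\<lambda>x. EK w x * complex_of_real (2 * real k * hermite_poly (k - 1) x))"
    using integrable_mult_right[OF EKH(1)[of w "k - 1"], of "complex_of_real (2 * real k)"]
    by (simp add: algebra_simps)
  have der: "(F has_vector_derivative f x) (at x)" for x
  proof -
    have "(F has_vector_derivative (EK w x * complex_of_real (2 * real k * hermite_poly (k - 1) x)
        + (EK w x * (complex_of_real (sqrt 2) * w - 2 * complex_of_real x)) * complex_of_real (hermite_poly k x))) (at x)"
      unfolding F_def by (intro has_vector_derivative_mult EK_deriv has_vector_derivative_of_real H_deriv)
    moreover have "EK w x * complex_of_real (2 * real k * hermite_poly (k - 1) x)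
        + (EK w x * (complex_of_real (sqrt 2) * w - 2 * complex_of_real x)) * complex_of_real (hermite_poly k x) = f x"
      unfolding f_def by (simp add: algebra_simps)
    ultimately show ?thesis by simp
  qed
  have cont: "isCont f x" for x
  proof -
    have "continuous_on UNIV f"
      unfolding f_def by (intro continuous_intros EK_cont H_cont)
    then show ?thesis by (simp add: continuous_on_eq_continuous_at)
  qed
  have intf: "integrable lborel f"
    unfolding f_def by (intro Bochner_Integration.integrable_add Bochner_Integration.integrable_diff
        integrable_mult_right iA iB iC)
  have e1: "integral\<^sup>L lborel f = 0"
    by (rule FTC_R[OF der cont intf]) (use EKH[of w k] in \<open>simp_all add: F_def[abs_def]\<close>)
  have e2: "integral\<^sup>L lborel f = (LINT x|lborel. EK w x * complex_of_real (2 * real k * hermite_poly (k - 1) x))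
     + complex_of_real (sqrt 2) * w * PI k w - 2 * (LINT x|lborel. EK w x * complex_of_real (x * hermite_poly k x))"
    unfolding f_def PI_def
    by (subst Bochner_Integration.integral_diff, (intro Bochner_Integration.integrable_add integrable_mult_right iA iB iC)+,
        subst Bochner_Integration.integral_add, (intro integrable_mult_right iA iB iC)+) simp
  have e3: "PI (Suc k) w = 2 * (LINT x|lborel. EK w x * complex_of_real (x * hermite_poly k x))
      - (LINT x|lborel. EK w x * complex_of_real (2 * real k * hermite_poly (k - 1) x))"
  proof -
    have "PI (Suc k) w = (LINT x|lborel. 2 * (EK w x * complex_of_real (x * hermite_poly k x))
      - EK w x * complex_of_real (2 * real k * hermite_poly (k - 1) x))"
      unfolding PI_def
    proof (intro Bochner_Integration.integral_cong refl)
      fix x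
      show "EK w x * complex_of_real (hermite_poly (Suc k) x) = 2 * (EK w x * complex_of_real (x * hermite_poly k x))
      - EK w x * complex_of_real (2 * real k * hermite_poly (k - 1) x)"
        by (simp only: H_rec of_real_diff of_real_mult) (simp add: algebra_simps)
    qed
    also have "\<dots> = 2 * (LINT x|lborel. EK w x * complex_of_real (x * hermite_poly k x))
      - (LINT x|lborel. EK w x * complex_of_real (2 * real k * hermite_poly (k - 1) x))"
      by (subst Bochner_Integration.integral_diff, (intro integrable_mult_right iA iB iC)+) simp
    finally show ?thesis .
  qed
  have "PI (Suc k) w = - integral\<^sup>L lborel f + complex_of_real (sqrt 2) * w * PI k w"
    unfolding e2 e3 by (simp add: algebra_simps)
  then show ?thesis unfolding e1 by simp
qed

lemma PI_formula: "PI k w = complex_of_real (sqrt pi) * (complex_of_real (sqrt 2) * w) ^ k"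
proof (induction k)
  case 0
  then show ?case using I0[of w] by (simp add: PI_def)
next
  case (Suc k)
  then show ?case by (simp add: PI_Suc)
qed



lemma modul:
  fixes xi x :: real and z :: complex
  defines "b \<equiv> - (\<i> / complex_of_real (sqrt 2)) * complex_of_real xi"
  shows "exp (- (z\<^sup>2 + (complex_of_real x)\<^sup>2) / 2 + complex_of_real (sqrt 2) * z * complex_of_real x)
       * exp (\<i> * complex_of_real (xi * x)) * complex_of_real (exp (- x\<^sup>2 / 2))
       = fock_kernel b z * EK (z - b) x"
proof -
  have s2: "complex_of_real (sqrt 2) * complex_of_real (sqrt 2) = 2"
    by (simp flip: of_real_mult)
  have nz: "complex_of_real (sqrt 2) \<noteq> 0" by simp
  have cb: "cnj b = \<i> * complex_of_real xi / complex_of_real (sqrt 2)" unfolding b_def by simp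
  have nb: "complex_of_real ((cmod b)\<^sup>2) = complex_of_real xi * complex_of_real xi / 2"
  proof -
    have "cmod b = \<bar>xi\<bar> / sqrt 2" unfolding b_def by (simp add: norm_mult norm_divide)
    then have "(cmod b)\<^sup>2 = xi * xi / 2" by (simp add: power_divide power2_eq_square)
    then show ?thesis by (simp only: of_real_mult of_real_divide of_real_numeral)
  qed
  have "- (z\<^sup>2 + (complex_of_real x)\<^sup>2) / 2 + complex_of_real (sqrt 2) * z * complex_of_real x
       + \<i> * complex_of_real (xi * x)
     = (z * cnj b - complex_of_real ((cmod b)\<^sup>2) / 2) +
       (- ((z - b)\<^sup>2 + (complex_of_real x)\<^sup>2) / 2 + complex_of_real (sqrt 2) * (z - b) * complex_of_real x)"
    unfolding cb nb unfolding b_def using s2 nz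
    by (simp add: field_simps power2_eq_square)
  then show ?thesis
    unfolding fock_kernel_def EK_def by (simp add: exp_add[symmetric] mult.assoc)
qed



lemma abst: fixes s f q r :: real
  assumes "s > 0" "f > 0" "q > 0" "r * q = 1"
  shows "r * (1 / (s ^ k * f * q)) * (q * q) * s ^ k = 1 / f"
proof -
  have "r * (1 / (s ^ k * f * q)) * (q * q) * s ^ k = (r * q) * (1 / f)"
    using assms by (simp add: field_simps)
  then show ?thesis using assms by simp
qed

lemma const_real: "pi powr (-1/4) * (2^k * fact k * sqrt pi) powr (-1/2) * sqrt pi * sqrt 2 ^ k = 1 / sqrt (fact k)"
proof -
  have p: "pi > 0" by (rule pi_gt_zero)
  have "(2^k * fact k * sqrt pi) powr (-1/2) = 1 / (sqrt 2 ^ k * sqrt (fact k) * pi powr (1/4))"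
  proof -
    have "(2^k * fact k * sqrt pi) powr (-1/2) = 1 / sqrt (2^k * fact k * sqrt pi)"
      by (simp add: powr_minus_divide powr_half_sqrt)
    also have "sqrt (2^k * fact k * sqrt pi) = sqrt 2 ^ k * sqrt (fact k) * sqrt (sqrt pi)"
      by (simp add: real_sqrt_mult real_sqrt_power)
    also have "sqrt (sqrt pi) = pi powr (1/4)"
    proof -
      have "sqrt (sqrt pi) = (pi powr (1/2)) powr (1/2)" using p by (simp add: powr_half_sqrt)
      also have "\<dots> = pi powr (1/4)" by (simp add: powr_powr)
      finally show ?thesis .
    qed
    finally show ?thesis .
  qed
  moreover have "sqrt pi = pi powr (1/4) * pi powr (1/4)"
    using p by (simp add: powr_add[symmetric] powr_half_sqrt)
  moreover have "pi powr (-1/4) * pi powr (1/4) = 1"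
    using p by (simp add: powr_add[symmetric])
  ultimately show ?thesis
    using p abst[of "sqrt 2" "sqrt (fact k)" "pi powr (1/4)" "pi powr (-1/4)" k] by simp
qed



lemma bargmann_term:
  "complex_of_real (pi powr (-1/4)) * (complex_of_real ((2 ^ k * fact k * sqrt pi) powr (-1/2)) * PI k w) = ek k w"
proof -
  have "complex_of_real (pi powr (-1/4)) * (complex_of_real ((2 ^ k * fact k * sqrt pi) powr (-1/2)) * PI k w)
     = complex_of_real (pi powr (-1/4) * (2^k * fact k * sqrt pi) powr (-1/2) * sqrt pi * sqrt 2 ^ k) * w ^ k"
    unfolding PI_formula by (simp add: power_mult_distrib)
  also have "\<dots> = ek k w" unfolding const_real ek_def by (simp add: divide_inverse)
  finally show ?thesis .
qed

theorem corollary3p20: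
  fixes a :: real and k n :: nat and z :: complex
  assumes "a > 1" and "n \<ge> 1"
  shows "bargmann (Hkn k n a) z
           = (\<Sum>j=0..n. complex_of_real (Ccoef j n a) * fock_kernel (bcoef j n) z * ek k (z - bcoef j n))
       \<and> (\<Sum>j=0..n. complex_of_real (Ccoef j n a) * fock_kernel (bcoef j n) z * ek k (z - bcoef j n))
           = (\<Sum>j=0..n. complex_of_real (Ccoef j n a) * weyl (bcoef j n) (ek k) z)"
proof
  define ck where "ck = (2 ^ k * fact k * sqrt pi) powr (-1/2)"
  define T where "T j x = complex_of_real (Ccoef j n a) * complex_of_real ck * fock_kernel (bcoef j n) z
      * (EK (z - bcoef j n) x * complex_of_real (hermite_poly k x))" for j x
  have pt: "exp (- (z\<^sup>2 + (complex_of_real x)\<^sup>2) / 2 + complex_of_real (sqrt 2) * z * complex_of_real x) * Hkn k n a x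
      = (\<Sum>j=0..n. T j x)" for x
    unfolding Hkn_def sum_distrib_left
  proof (intro sum.cong refl)
    fix j
    have m: "exp (- (z\<^sup>2 + (complex_of_real x)\<^sup>2) / 2 + complex_of_real (sqrt 2) * z * complex_of_real x)
       * exp (\<i> * complex_of_real ((1 - 2 * real j / real n) * x)) * complex_of_real (exp (- x\<^sup>2 / 2))
       = fock_kernel (bcoef j n) z * EK (z - bcoef j n) x"
      unfolding bcoef_def by (rule modul)
    show "exp (- (z\<^sup>2 + (complex_of_real x)\<^sup>2) / 2 + complex_of_real (sqrt 2) * z * complex_of_real x) *
        (complex_of_real (hermite_fun k x) *
         (complex_of_real (Ccoef j n a) * exp (\<i> * complex_of_real ((1 - 2 * real j / real n) * x)))) = T j x"
    proof -
      have "exp (- (z\<^sup>2 + (complex_of_real x)\<^sup>2) / 2 + complex_of_real (sqrt 2) * z * complex_of_real x) *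
        (complex_of_real (hermite_fun k x) *
         (complex_of_real (Ccoef j n a) * exp (\<i> * complex_of_real ((1 - 2 * real j / real n) * x))))
        = complex_of_real (Ccoef j n a) * complex_of_real ck * complex_of_real (hermite_poly k x) *
          (exp (- (z\<^sup>2 + (complex_of_real x)\<^sup>2) / 2 + complex_of_real (sqrt 2) * z * complex_of_real x)
       * exp (\<i> * complex_of_real ((1 - 2 * real j / real n) * x)) * complex_of_real (exp (- x\<^sup>2 / 2)))"
        unfolding hermite_fun_def ck_def[symmetric] of_real_mult[of "ck * hermite_poly k x"] of_real_mult[of ck]
        by (simp only: mult_ac)
      also have "\<dots> = T j x" unfolding m T_def by (simp only: mult_ac)
      finally show ?thesis .
    qed
  qed
  have intT: "integrable lborel (T j)" for j
    unfolding T_def[abs_def] by (intro integrable_mult_right EKH(1))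
  have "bargmann (Hkn k n a) z = complex_of_real (pi powr (-1/4)) * (\<Sum>j=0..n. LINT x|lborel. T j x)"
    unfolding bargmann_def pt by (subst Bochner_Integration.integral_sum) (auto intro: intT)
  also have "\<dots> = (\<Sum>j=0..n. complex_of_real (Ccoef j n a) * fock_kernel (bcoef j n) z * ek k (z - bcoef j n))"
    unfolding sum_distrib_left
  proof (intro sum.cong refl)
    fix j
    have "(LINT x|lborel. T j x) = complex_of_real (Ccoef j n a) * complex_of_real ck * fock_kernel (bcoef j n) z
        * PI k (z - bcoef j n)"
      unfolding T_def PI_def by simp
    then show "complex_of_real (pi powr (-1/4)) * (LINT x|lborel. T j x)
        = complex_of_real (Ccoef j n a) * fock_kernel (bcoef j n) z * ek k (z - bcoef j n)"
      using bargmann_term[of k "z - bcoef j n"] unfolding ck_def[symmetric]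
      by (simp add: algebra_simps)
  qed
  finally show "bargmann (Hkn k n a) z
           = (\<Sum>j=0..n. complex_of_real (Ccoef j n a) * fock_kernel (bcoef j n) z * ek k (z - bcoef j n))" .
next
  show "(\<Sum>j=0..n. complex_of_real (Ccoef j n a) * fock_kernel (bcoef j n) z * ek k (z - bcoef j n))
           = (\<Sum>j=0..n. complex_of_real (Ccoef j n a) * weyl (bcoef j n) (ek k) z)"
    unfolding weyl_def by (simp add: algebra_simps)
qed

end
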